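(* Let $\Pi$ be a finite simply laced diagram with labelling $\sigma:I\to V$, $I=\{1,\dots,|V|\}$, and let $\mathcal A=\{G_{ij},\phi^i_{ij}\mid i\ne j\in I\}$ be a continuous $\mathrm{SO}(2)$-amalgam with respect to $\Pi$ and $\sigma$. Then $\mathcal A$ is isomorphic (as an $\mathrm{SO}(2)$-amalgam) to the standard $\mathrm{SO}(2)$-amalgam $\mathcal A(\Pi,\sigma,\mathrm{SO}(2))$.
   Context: A simply laced diagram is a finite graph $\Pi$ with vertex set $V$ (all edges simple); a labelling is a bijection $\sigma:I\to V$. $\varepsilon_{12},\varepsilon_{23}:\mathrm{SO}(2)\to\mathrm{SO}(3)$ embed a $2\times2$ rotation matrix as the upper-left, resp. lower-right, $2\times 2$ diagonal block; $\iota_1(x)=(x,1)$, $\iota_2(x)=(1,x)$ into $\mathrm{SO}(2)\times\mathrm{SO}(2)$. An $\mathrm{SO}(2)$-amalgam with respect to $\Pi$ and $\sigma$ is a family of groups $G_{ij}$ ($i\ne j\in I$, $G_{ij}=G_{ji}$) with monomorphisms $\phi^i_{ij}:\mathrm{SO}(2)\to G_{ij}$ such that $G_{ij}=\mathrm{SO}(3)$ if $\{i^\sigma,j^\sigma\}$ is an edge and $G_{ij}=\mathrm{SO}(2)\times\mathrm{SO}(2)$ otherwise, and for $i<j$ the images satisfy $\phi^i_{ij}(\mathrm{SO}(2))=\varepsilon_{12}(\mathrm{SO}(2))$, $\phi^j_{ij}(\mathrm{SO}(2))=\varepsilon_{23}(\mathrm{SO}(2))$ in the edge case and $\phi^i_{ij}(\mathrm{SO}(2))=\iota_1(\mathrm{SO}(2))$,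 $\phi^j_{ij}(\mathrm{SO}(2))=\iota_2(\mathrm{SO}(2))$ otherwise. It is continuous if all $\phi^i_{ij}$ are continuous (Lie group topologies). The standard one $\mathcal A(\Pi,\sigma,\mathrm{SO}(2))$ has, for $i<j$, $\phi^i_{ij}=\varepsilon_{12},\phi^j_{ij}=\varepsilon_{23}$ (edge) resp. $\phi^i_{ij}=\iota_1,\phi^j_{ij}=\iota_2$ (non-edge). An isomorphism of $\mathrm{SO}(2)$-amalgams $\{G_{ij},\phi^i_{ij}\}\to\{H_{ij},\psi^i_{ij}\}$ is a permutation $\pi$ of $I$ together with group isomorphisms $\alpha_{ij}:G_{ij}\to H_{\pi(i)\pi(j)}$ such that $\alpha_{ij}\circ\phi^i_{ij}=\psi^{\pi(i)}_{\pi(i)\pi(j)}$ for all $i\ne j$. *)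

theory Defs
  imports "HOL-Analysis.Analysis" "HOL-Algebra.Group"
begin

type_synonym m2 = "real^2^2"
type_synonym m3 = "real^3^3"
(* common carrier type: SO(3) lives in the left summand, SO(2) x SO(2) in the right *)
type_synonym amg = "m3 + (m2 \<times> m2)"

definition SO2 :: "m2 set" where
  "SO2 = {A. orthogonal_matrix A \<and> det A = 1}"

definition SO3 :: "m3 set" where
  "SO3 = {A. orthogonal_matrix A \<and> det A = 1}"

definition SO2_grp :: "m2 monoid" where
  "SO2_grp = \<lparr>carrier = SO2, mult = (\<lambda>A B. A ** B), one = mat 1\<rparr>"

definition SO3_grp :: "amg monoid" where
  "SO3_grp = \<lparr>carrier = Inl ` SO3, mult = (\<lambda>x y. Inl (projl x ** projl y)), one = Inl (mat 1)\<rparr>"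

definition T2_grp :: "amg monoid" where
  "T2_grp = \<lparr>carrier = Inr ` (SO2 \<times> SO2),
     mult = (\<lambda>x y. Inr (fst (projr x) ** fst (projr y), snd (projr x) ** snd (projr y))),
     one = Inr (mat 1, mat 1)\<rparr>"

(* upper-left 2x2 block embedding SO(2) -> SO(3) *)
definition eps12_mat :: "m2 \<Rightarrow> m3" where
  "eps12_mat A = (\<chi> i j. if i = 3 \<or> j = 3 then (if i = j then 1 else 0)
                      else A $ (if i = 1 then 1 else 2) $ (if j = 1 then 1 else 2))"

(* lower-right 2x2 block embedding SO(2) -> SO(3) *)
definition eps23_mat :: "m2 \<Rightarrow> m3" where
  "eps23_mat A = (\<chi> i j. if i = 1 \<or> j = 1 then (if i = j then 1 else 0)
                      else A $ (if i = 2 then 1 else 2) $ (if j = 2 then 1 else 2))"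

definition eps12 :: "m2 \<Rightarrow> amg" where "eps12 A = Inl (eps12_mat A)"
definition eps23 :: "m2 \<Rightarrow> amg" where "eps23 A = Inl (eps23_mat A)"
definition iota1 :: "m2 \<Rightarrow> amg" where "iota1 A = Inr (A, mat 1)"
definition iota2 :: "m2 \<Rightarrow> amg" where "iota2 A = Inr (mat 1, A)"

definition simple_diagram :: "'v set \<Rightarrow> ('v \<Rightarrow> 'v \<Rightarrow> bool) \<Rightarrow> bool" where
  "simple_diagram V E \<longleftrightarrow> finite V \<and>
     (\<forall>x y. E x y \<longrightarrow> x \<in> V \<and> y \<in> V \<and> x \<noteq> y \<and> E y x)"

definition index_set :: "'v set \<Rightarrow> nat set" where
  "index_set V = {1..card V}"

definition amal_grp :: "('v \<Rightarrow> 'v \<Rightarrow> bool) \<Rightarrow> (nat \<Rightarrow> 'v) \<Rightarrow> nat \<Rightarrow> nat \<Rightarrow> amg monoid" where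
  "amal_grp E \<sigma> i j = (if E (\<sigma> i) (\<sigma> j) then SO3_grp else T2_grp)"

(* An SO(2)-amalgam is encoded by phi, where phi i j = \<phi>^i_{ij} : SO(2) -> G_ij
   (so \<phi>^j_{ij} = phi j i). *)
definition SO2_amalgam ::
  "'v set \<Rightarrow> ('v \<Rightarrow> 'v \<Rightarrow> bool) \<Rightarrow> (nat \<Rightarrow> 'v) \<Rightarrow> (nat \<Rightarrow> nat \<Rightarrow> m2 \<Rightarrow> amg) \<Rightarrow> bool" where
  "SO2_amalgam V E \<sigma> phi \<longleftrightarrow>
     (\<forall>i\<in>index_set V. \<forall>j\<in>index_set V. i \<noteq> j \<longrightarrow>
        phi i j \<in> hom SO2_grp (amal_grp E \<sigma> i j) \<and> inj_on (phi i j) SO2) \<and>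
     (\<forall>i\<in>index_set V. \<forall>j\<in>index_set V. i < j \<longrightarrow>
        (if E (\<sigma> i) (\<sigma> j)
         then phi i j ` SO2 = eps12 ` SO2 \<and> phi j i ` SO2 = eps23 ` SO2
         else phi i j ` SO2 = iota1 ` SO2 \<and> phi j i ` SO2 = iota2 ` SO2))"

(* continuity w.r.t. the Lie group (= matrix subspace) topologies *)
definition continuous_amalgam ::
  "'v set \<Rightarrow> ('v \<Rightarrow> 'v \<Rightarrow> bool) \<Rightarrow> (nat \<Rightarrow> 'v) \<Rightarrow> (nat \<Rightarrow> nat \<Rightarrow> m2 \<Rightarrow> amg) \<Rightarrow> bool" where
  "continuous_amalgam V E \<sigma> phi \<longleftrightarrow>
     (\<forall>i\<in>index_set V. \<forall>j\<in>index_set V. i \<noteq> j \<longrightarrow>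
        (if E (\<sigma> i) (\<sigma> j) then continuous_on SO2 (projl \<circ> phi i j)
         else continuous_on SO2 (projr \<circ> phi i j)))"

definition standard_amalgam :: "('v \<Rightarrow> 'v \<Rightarrow> bool) \<Rightarrow> (nat \<Rightarrow> 'v) \<Rightarrow> nat \<Rightarrow> nat \<Rightarrow> m2 \<Rightarrow> amg" where
  "standard_amalgam E \<sigma> i j =
     (if i < j then (if E (\<sigma> i) (\<sigma> j) then eps12 else iota1)
      else (if E (\<sigma> i) (\<sigma> j) then eps23 else iota2))"

definition amalgam_isomorphic ::
  "'v set \<Rightarrow> ('v \<Rightarrow> 'v \<Rightarrow> bool) \<Rightarrow> (nat \<Rightarrow> 'v) \<Rightarrow> (nat \<Rightarrow> nat \<Rightarrow> m2 \<Rightarrow> amg)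
     \<Rightarrow> (nat \<Rightarrow> nat \<Rightarrow> m2 \<Rightarrow> amg) \<Rightarrow> bool" where
  "amalgam_isomorphic V E \<sigma> phi psi \<longleftrightarrow>
     (\<exists>\<pi> \<alpha>. bij_betw \<pi> (index_set V) (index_set V) \<and>
       (\<forall>i\<in>index_set V. \<forall>j\<in>index_set V. i \<noteq> j \<longrightarrow>
          \<alpha> i j \<in> iso (amal_grp E \<sigma> i j) (amal_grp E \<sigma> (\<pi> i) (\<pi> j)) \<and>
          (\<forall>x\<in>carrier (amal_grp E \<sigma> i j). \<alpha> i j x = \<alpha> j i x) \<and>
          (\<forall>x\<in>SO2. \<alpha> i j (phi i j x) = psi (\<pi> i) (\<pi> j) x)))"

end

theory Submission
  imports Defs
begin


lemma cauchy_add: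
  fixes k :: "real \<Rightarrow> complex"
  assumes add: "\<And>s t. k (s+t) = k s + k t" and cont: "continuous_on UNIV k"
  shows "k t = of_real t * k 1"
proof -
  have k0: "k 0 = 0" using add[of 0 0] by simp
  have nat: "k (of_nat n * t) = of_nat n * k t" for n t
    by (induction n) (simp_all add: k0 add distrib_right)
  have neg: "k (-t) = - k t" for t using add[of t "-t"] k0 by (simp add: eq_neg_iff_add_eq_0 add.commute)
  have int: "k (of_int m * t) = of_int m * k t" for m t
  proof (cases "m \<ge> 0")
    case True
    then have "m = int (nat m)" by simp
    then show ?thesis using nat[of "nat m" t] by (metis of_int_of_nat_eq)
  next
    case False
    then have m: "m = - int (nat (-m))" by simp
    have "k (of_int m * t) = k (- (of_nat (nat (-m)) * t))" by (subst m) simp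
    also have "\<dots> = - (of_nat (nat (-m)) * k t)" by (simp add: neg nat)
    also have "\<dots> = of_int m * k t" by (subst (2) m) simp
    finally show ?thesis .
  qed
  have rat: "k q = of_real q * k 1" if hq: "q \<in> \<rat>" for q
  proof -
    obtain a b where b: "b > 0" and q: "q = of_int a / of_int b" using Rats_cases'[OF hq] by metis
    have "of_int b * k q = k (of_int b * q)" by (simp add: int)
    also have "of_int b * q = of_int a * 1" using b by (simp add: q)
    also have "k (of_int a * 1) = of_int a * k 1" by (rule int)
    finally have "of_int b * k q = of_int a * k 1" .
    then have "k q = of_int a / of_int b * k 1" using b by (simp add: field_simps)
    then show ?thesis by (simp add: q)
  qed
  have cl: "closed {t. k t = of_real t * k 1}"
    by (intro closed_Collect_eq cont continuous_on_mult_right continuous_on_of_real continuous_on_id)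
  have "\<rat> \<subseteq> {t. k t = of_real t * k 1}" using rat by blast
  then have "closure \<rat> \<subseteq> {t. k t = of_real t * k 1}" using cl by (rule closure_minimal)
  then show ?thesis using Rats_closure_real by auto
qed

lemma circle_aut:
  fixes F :: "complex \<Rightarrow> complex"
  assumes cont: "continuous_on (sphere 0 1) F"
    and into: "\<And>z. norm z = 1 \<Longrightarrow> norm (F z) = 1"
    and mult: "\<And>z w. norm z = 1 \<Longrightarrow> norm w = 1 \<Longrightarrow> F (z*w) = F z * F w"
    and inj: "inj_on F (sphere 0 1)"
  shows "(\<forall>z. norm z = 1 \<longrightarrow> F z = z) \<or> (\<forall>z. norm z = 1 \<longrightarrow> F z = cnj z)"
proof -
  define c where "c t = F (cis t)" for t
  have contc: "continuous_on UNIV c" unfolding c_def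
    by (rule continuous_on_compose2[OF cont]) (auto intro!: continuous_intros)
  have cmul: "c (s+t) = c s * c t" for s t unfolding c_def by (simp add: mult cis_mult[symmetric])
  have cnz: "c t \<noteq> 0" for t using into[of "cis t"] by (auto simp: c_def)
  obtain g where contg: "continuous_on UNIV g" and g: "\<And>t. c t = exp (g t)"
    by (rule continuous_logarithm_on_contractible[OF contc contractible_UNIV]) (auto simp: cnz)
  have F1: "F 1 = 1"
  proof -
    have "F 1 = F 1 * F 1" using mult[of 1 1] by simp
    moreover have "F 1 \<noteq> 0" using into[of 1] by auto
    ultimately show ?thesis by simp
  qed
  have c0: "c 0 = 1" by (simp add: c_def F1)
  have D: "g (s+t) - g s - g t = - g 0" for s t
  proof -
    define h where "h t = g (s+t) - g s - g t" for t
    have e1: "exp (h t) = 1" for t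
      by (simp add: h_def exp_diff g[symmetric] cmul cnz)
    have "h constant_on UNIV"
    proof (rule continuous_discrete_range_constant)
      show "connected (UNIV::real set)" by simp
      have "continuous_on UNIV (\<lambda>t. g (s + t))"
        by (rule continuous_on_compose2[OF contg]) (auto intro!: continuous_intros)
      then show "continuous_on UNIV h" unfolding h_def
        by (intro continuous_on_diff continuous_on_const contg)
      fix x :: real assume "x \<in> UNIV"
      show "\<exists>e>0. \<forall>y. y \<in> UNIV \<and> h y \<noteq> h x \<longrightarrow> e \<le> norm (h y - h x)"
      proof (intro exI[of _ "2*pi"] conjI allI impI)
        show "0 < 2*pi" by simp
        fix y assume "y \<in> UNIV \<and> h y \<noteq> h x"
        then have ne: "h y \<noteq> h x" by simp
        obtain m :: int where m: "Re (h y) = 0" "Im (h y) = of_int (2*m) * pi" using e1[of y] exp_eq_1 by metis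
        obtain n :: int where n: "Re (h x) = 0" "Im (h x) = of_int (2*n) * pi" using e1[of x] exp_eq_1 by metis
        have "m \<noteq> n" using ne m n by (auto simp: complex_eq_iff)
        then have "(1::int) \<le> \<bar>m - n\<bar>" by arith
        then have "1 \<le> \<bar>real_of_int m - real_of_int n\<bar>"
          by (metis of_int_1_le_iff of_int_abs of_int_diff)
        then have "2*pi \<le> 2*pi*\<bar>real_of_int m - real_of_int n\<bar>" by simp
        also have "\<dots> = \<bar>Im (h y - h x)\<bar>"
        proof -
          have "Im (h y - h x) = 2*pi*(real_of_int m - real_of_int n)" using m n by (simp add: algebra_simps)
          then show ?thesis by (simp add: abs_mult)
        qed
        also have "\<dots> \<le> norm (h y - h x)" by (rule abs_Im_le_cmod)
        finally show "2*pi \<le> norm (h y - h x)" .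
      qed
    qed
    then have "h t = h 0" by (auto simp: constant_on_def)
    then show ?thesis by (simp add: h_def)
  qed
  define k where "k t = g t - g 0" for t
  have kadd: "k (s+t) = k s + k t" for s t using D[of s t] by (simp add: k_def algebra_simps)
  have kcont: "continuous_on UNIV k" unfolding k_def by (intro continuous_intros contg)
  have klin: "k t = of_real t * k 1" for t by (rule cauchy_add[OF kadd kcont])
  have eg0: "exp (g 0) = 1" using g[of 0] c0 by simp
  have ct: "c t = exp (of_real t * k 1)" for t
  proof -
    have "c t = exp (k t + g 0)" by (simp add: g k_def)
    also have "\<dots> = exp (k t)" by (simp add: exp_add eg0)
    finally show ?thesis using klin[of t] by simp
  qed
  have "exp (of_real (2*pi) * k 1) = 1" using ct[of "2*pi"] by (simp add: c_def F1)
  then obtain n :: int where "Re (of_real (2*pi) * k 1) = 0" "Im (of_real (2*pi) * k 1) = of_int (2*n) * pi"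
    using exp_eq_1 by metis
  then have "Re (k 1) = 0" "Im (k 1) = of_int n" by auto
  then have k1: "k 1 = \<i> * of_int n" by (simp add: complex_eq_iff)
  have Fcis: "F (cis t) = cis (of_int n * t)" for t
    using ct[of t] by (simp add: c_def k1 cis_conv_exp mult_ac)
  have n1: "n = 1 \<or> n = -1"
  proof (rule ccontr)
    assume nn: "\<not> (n = 1 \<or> n = -1)"
    show False
    proof (cases "n = 0")
      case True
      have "F (cis pi) = F (cis 0)" using Fcis[of pi] Fcis[of 0] True by simp
      then have "cis pi = cis 0" using inj by (auto dest: inj_onD)
      then show False by simp
    next
      case False
      define t where "t = 2*pi / of_int n"
      have "F (cis t) = F (cis 0)" using Fcis[of t] Fcis[of 0] False by (simp add: t_def)
      then have "cis t = 1" using inj by (auto dest: inj_onD)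
      then have "exp (\<i> * of_real t) = 1" by (simp add: cis_conv_exp)
      then obtain m :: int where "Im (\<i> * of_real t) = of_int (2*m) * pi" using exp_eq_1 by metis
      then have "2*pi / of_int n = 2 * of_int m * pi" by (simp add: t_def)
      then have "real_of_int (n*m) = 1" using False by (simp add: field_simps)
      then have "n*m = 1" by linarith
      then show False using nn by (simp add: zmult_eq_1_iff)
    qed
  qed
  have zc: "z = cis (Arg z)" if "norm z = 1" for z
  proof -
    have "z \<noteq> 0" using that by auto
    then show ?thesis using that cis_Arg[of z] by (auto simp: sgn_div_norm)
  qed
  have Fz: "F z = cis (of_int n * Arg z)" if "norm z = 1" for z
  proof -
    have "F z = F (cis (Arg z))" using zc[OF that] by (rule arg_cong)
    then show ?thesis by (simp only: Fcis)
  qed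
  show ?thesis
  proof (cases "n = 1")
    case True
    have "F z = z" if "norm z = 1" for z
    proof -
      have "F z = cis (Arg z)" using Fz[OF that] True by simp
      also have "\<dots> = z" using zc[OF that] by (rule sym)
      finally show ?thesis .
    qed
    then show ?thesis by blast
  next
    case False
    then have nm: "n = -1" using n1 by simp
    have "F z = cnj z" if "norm z = 1" for z
    proof -
      have "F z = cis (- Arg z)" using Fz[OF that] nm by simp
      also have "\<dots> = cnj (cis (Arg z))" by (simp add: cis_cnj)
      also have "cis (Arg z) = z" using zc[OF that] by (rule sym)
      finally show ?thesis .
    qed
    then show ?thesis by blast
  qed
qed



definition rotm :: "complex \<Rightarrow> m2" where
  "rotm z = (\<chi> i j. if i = j then Re z else if i = 1 then - Im z else Im z)"

definition cpx :: "m2 \<Rightarrow> complex" where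
  "cpx A = Complex (A$1$1) (A$2$1)"

lemmas ME = matrix_matrix_mult_def mat_def transpose_def vec_eq_iff forall_2 forall_3 sum_2 sum_3

lemma neq2[simp]: "(1::2) \<noteq> 2" "(2::2) \<noteq> 1" by (simp_all add: exhaust_2)
lemma neq3[simp]: "(1::3) \<noteq> 2" "(2::3) \<noteq> 1" "(1::3) \<noteq> 3" "(3::3) \<noteq> 1" "(2::3) \<noteq> 3" "(3::3) \<noteq> 2"
  by simp_all

lemma rotm_nth[simp]: "rotm z $ 1 $ 1 = Re z" "rotm z $ 1 $ 2 = - Im z" "rotm z $ 2 $ 1 = Im z" "rotm z $ 2 $ 2 = Re z"
  by (simp_all add: rotm_def)

lemma rotm_mult: "rotm (z*w) = rotm z ** rotm w"
  by (simp add: ME algebra_simps)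

lemma rotm_1: "rotm 1 = mat 1"
  by (simp add: ME)

lemma transpose_rotm: "transpose (rotm z) = rotm (cnj z)"
  by (simp add: ME)

lemma cpx_rotm[simp]: "cpx (rotm z) = z"
  by (simp add: cpx_def complex_eq_iff)

lemma rotm_inj: "rotm z = rotm w \<Longrightarrow> z = w"
  by (metis cpx_rotm)

lemma cnj_mult_norm1: "norm z = 1 \<Longrightarrow> cnj z * z = 1"
  using complex_norm_square[of z] by (simp add: mult.commute)

lemma rotm_SO2: "norm z = 1 \<Longrightarrow> rotm z \<in> SO2"
proof -
  assume n: "norm z = 1"
  have c1: "cnj z * z = 1" using cnj_mult_norm1[OF n] .
  have c2: "z * cnj z = 1" using c1 by (simp add: mult.commute)
  have o: "orthogonal_matrix (rotm z)"
    unfolding orthogonal_matrix_def transpose_rotm rotm_mult[symmetric] c1 c2 rotm_1 by simp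
  have "(Re z)^2 + (Im z)^2 = 1" using n cmod_power2[of z] by simp
  then have "det (rotm z) = 1" by (simp add: det_2 power2_eq_square)
  then show ?thesis using o by (simp add: SO2_def)
qed

lemma SO2_rotm: assumes "A \<in> SO2" shows "A = rotm (cpx A)" "norm (cpx A) = 1"
proof -
  have T: "transpose A ** A = mat 1" and D: "det A = 1"
    using assms by (auto simp: SO2_def orthogonal_matrix_def)
  have Te: "(transpose A ** A) $ i $ j = mat 1 $ i $ j" for i j using T by simp
  define a where "a = A$1$1"
  define b where "b = A$1$2"
  define c where "c = A$2$1"
  define d where "d = A$2$2"
  have h1: "a*a + c*c = 1" using Te[of 1 1] by (simp add: ME a_def c_def)
  have h3: "a*b + c*d = 0" using Te[of 1 2] by (simp add: ME a_def b_def c_def d_def)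
  have h4: "a*d - b*c = 1" using D by (simp add: det_2 a_def b_def c_def d_def)
  have "b + c = b*(a*a+c*c) + c*(a*d-b*c) - a*(a*b+c*d)" using h1 h3 h4 by simp
  also have "\<dots> = 0" by (simp add: algebra_simps)
  finally have bc: "b = - c" by simp
  have "d - a = d*(a*a+c*c) - a*(a*d-b*c) - c*(a*b+c*d)" using h1 h3 h4 by simp
  also have "\<dots> = 0" by (simp add: algebra_simps)
  finally have da: "d = a" by simp
  show "A = rotm (cpx A)"
    using bc da by (simp add: vec_eq_iff forall_2 cpx_def a_def b_def c_def d_def)
  have "norm (cpx A) = sqrt (a*a + c*c)" by (simp add: cpx_def a_def c_def complex_norm power2_eq_square)
  then show "norm (cpx A) = 1" using h1 by simp
qed

lemma SO2_mult: "A \<in> SO2 \<Longrightarrow> B \<in> SO2 \<Longrightarrow> A ** B \<in> SO2"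
  by (metis SO2_rotm rotm_mult rotm_SO2 norm_mult mult_1)

lemma SO2_comm: "A \<in> SO2 \<Longrightarrow> B \<in> SO2 \<Longrightarrow> A ** B = B ** A"
  by (metis SO2_rotm rotm_mult mult.commute)

lemma SO2_transpose: "A \<in> SO2 \<Longrightarrow> transpose A \<in> SO2"
  by (metis SO2_rotm transpose_rotm rotm_SO2 complex_mod_cnj)

lemma SO2_transpose_mult: "A \<in> SO2 \<Longrightarrow> B \<in> SO2 \<Longrightarrow> transpose (A ** B) = transpose A ** transpose B"
  by (simp add: matrix_transpose_mul SO2_comm SO2_transpose)

lemma cont_rotm: "continuous_on S rotm"
proof -
  have "continuous_on S (\<lambda>z. if i = j then Re z else if i = 1 then - Im z else Im z)" for i j :: 2
    by (cases "i = j"; cases "i = 1") (simp_all add: continuous_intros)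
  then show ?thesis unfolding rotm_def by (intro continuous_on_vec_lambda)
qed

lemma cont_cpx: "continuous_on S cpx"
  unfolding cpx_def by (intro continuous_intros continuous_on_id)

lemma so2_aut:
  assumes cont: "continuous_on SO2 f" and into: "\<And>x. x \<in> SO2 \<Longrightarrow> f x \<in> SO2"
    and hom: "\<And>x y. x \<in> SO2 \<Longrightarrow> y \<in> SO2 \<Longrightarrow> f (x ** y) = f x ** f y"
    and inj: "inj_on f SO2"
  shows "(\<forall>x\<in>SO2. f x = x) \<or> (\<forall>x\<in>SO2. f x = transpose x)"
proof -
  define F where "F z = cpx (f (rotm z))" for z
  have rs: "rotm z \<in> SO2" if "z \<in> sphere 0 1" for z using that rotm_SO2 by simp
  have contF: "continuous_on (sphere 0 1) F"
  proof -
    have "continuous_on (sphere 0 1) (\<lambda>z. f (rotm z))"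
      by (rule continuous_on_compose2[OF cont cont_rotm]) (auto simp: rs)
    then show ?thesis unfolding F_def by (rule continuous_on_compose2[OF cont_cpx]) auto
  qed
  have fr: "f (rotm z) = rotm (F z)" if "norm z = 1" for z
    unfolding F_def using SO2_rotm(1)[OF into[OF rotm_SO2[OF that]]] .
  have intoF: "norm (F z) = 1" if "norm z = 1" for z
    unfolding F_def using SO2_rotm(2)[OF into[OF rotm_SO2[OF that]]] .
  have multF: "F (z*w) = F z * F w" if "norm z = 1" "norm w = 1" for z w
  proof -
    have "F (z*w) = cpx (f (rotm z ** rotm w))" by (simp add: F_def rotm_mult)
    also have "\<dots> = cpx (f (rotm z) ** f (rotm w))" using hom rotm_SO2 that by simp
    also have "\<dots> = cpx (rotm (F z * F w))" using fr that by (simp add: rotm_mult)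
    finally show ?thesis by simp
  qed
  have injF: "inj_on F (sphere 0 1)"
  proof (rule inj_onI)
    fix z w assume z: "z \<in> sphere 0 1" and w: "w \<in> sphere 0 1" and e: "F z = F w"
    then have "f (rotm z) = f (rotm w)" using fr by simp
    then have "rotm z = rotm w" using inj rs z w by (auto dest: inj_onD)
    then show "z = w" by (rule rotm_inj)
  qed
  have "(\<forall>z. norm z = 1 \<longrightarrow> F z = z) \<or> (\<forall>z. norm z = 1 \<longrightarrow> F z = cnj z)"
    by (rule circle_aut[OF contF intoF multF injF])
  then show ?thesis
  proof
    assume H: "\<forall>z. norm z = 1 \<longrightarrow> F z = z"
    have "f x = x" if "x \<in> SO2" for x
    proof -
      have "f x = f (rotm (cpx x))" using SO2_rotm(1)[OF that] by simp
      also have "\<dots> = rotm (cpx x)" using fr H SO2_rotm(2)[OF that] by simp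
      finally show ?thesis using SO2_rotm(1)[OF that] by simp
    qed
    then show ?thesis by blast
  next
    assume H: "\<forall>z. norm z = 1 \<longrightarrow> F z = cnj z"
    have "f x = transpose x" if "x \<in> SO2" for x
    proof -
      have "f x = f (rotm (cpx x))" using SO2_rotm(1)[OF that] by simp
      also have "\<dots> = rotm (cnj (cpx x))" using fr H SO2_rotm(2)[OF that] by simp
      also have "\<dots> = transpose (rotm (cpx x))" by (simp add: transpose_rotm)
      finally show ?thesis using SO2_rotm(1)[OF that] by simp
    qed
    then show ?thesis by blast
  qed
qed



definition blk12 :: "m3 \<Rightarrow> m2" where
  "blk12 M = (\<chi> a b. M $ (if a = 1 then 1 else 2) $ (if b = 1 then 1 else 2))"
definition blk23 :: "m3 \<Rightarrow> m2" where
  "blk23 M = (\<chi> a b. M $ (if a = 1 then 2 else 3) $ (if b = 1 then 2 else 3))"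

lemma blk12_eps: "blk12 (eps12_mat A) = A"
  by (simp add: vec_eq_iff forall_2 blk12_def eps12_mat_def)
lemma blk23_eps: "blk23 (eps23_mat A) = A"
  by (simp add: vec_eq_iff forall_2 blk23_def eps23_mat_def)

lemma eps12_mult: "eps12_mat (A ** B) = eps12_mat A ** eps12_mat B"
  by (simp add: ME eps12_mat_def)
lemma eps23_mult: "eps23_mat (A ** B) = eps23_mat A ** eps23_mat B"
  by (simp add: ME eps23_mat_def)

lemma cont_blk12: "continuous_on UNIV blk12"
  unfolding blk12_def by (intro continuous_on_vec_lambda continuous_on_component continuous_on_id)
lemma cont_blk23: "continuous_on UNIV blk23"
  unfolding blk23_def by (intro continuous_on_vec_lambda continuous_on_component continuous_on_id)

lemma extract_sgn:
  fixes phi emb :: "m2 \<Rightarrow> amg" and P :: "amg \<Rightarrow> 'b::topological_space" and q :: "'b \<Rightarrow> m2"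
  assumes hom: "phi \<in> hom SO2_grp G" and inj: "inj_on phi SO2" and img: "phi ` SO2 = emb ` SO2"
    and cont: "continuous_on SO2 (P \<circ> phi)" and contq: "continuous_on UNIV q"
    and left: "\<And>y. y \<in> SO2 \<Longrightarrow> q (P (emb y)) = y"
    and embm: "\<And>y z. y \<in> SO2 \<Longrightarrow> z \<in> SO2 \<Longrightarrow> emb (y ** z) = emb y \<otimes>\<^bsub>G\<^esub> emb z"
  shows "\<exists>b. \<forall>x\<in>SO2. phi x = emb (if b then transpose x else x)"
proof -
  define f where "f = q \<circ> (P \<circ> phi)"
  have fe: "f x \<in> SO2 \<and> phi x = emb (f x)" if "x \<in> SO2" for x
  proof -
    have "phi x \<in> emb ` SO2" using img that by blast
    then obtain y where y: "y \<in> SO2" "phi x = emb y" by blast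
    then have "f x = y" using left by (simp add: f_def)
    then show ?thesis using y by simp
  qed
  have phm: "phi (x ** y) = phi x \<otimes>\<^bsub>G\<^esub> phi y" if "x \<in> SO2" "y \<in> SO2" for x y
    using hom_mult[OF hom, of x y] that by (simp add: SO2_grp_def)
  have fhom: "f (x ** y) = f x ** f y" if "x \<in> SO2" "y \<in> SO2" for x y
  proof -
    have "phi (x ** y) = emb (f x ** f y)"
      using phm[OF that] fe that embm by simp
    then have "f (x ** y) = q (P (emb (f x ** f y)))" by (simp add: f_def)
    also have "\<dots> = f x ** f y" using left SO2_mult fe that by simp
    finally show ?thesis .
  qed
  have finj: "inj_on f SO2"
  proof (rule inj_onI)
    fix x y assume "x \<in> SO2" "y \<in> SO2" "f x = f y"
    then have "phi x = phi y" using fe by metis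
    then show "x = y" using inj \<open>x \<in> SO2\<close> \<open>y \<in> SO2\<close> by (auto dest: inj_onD)
  qed
  have fcont: "continuous_on SO2 f"
    unfolding f_def by (rule continuous_on_compose[OF cont continuous_on_subset[OF contq]]) auto
  from so2_aut[OF fcont _ fhom finj] fe
  have "(\<forall>x\<in>SO2. f x = x) \<or> (\<forall>x\<in>SO2. f x = transpose x)" by blast
  then show ?thesis
  proof
    assume "\<forall>x\<in>SO2. f x = x" then show ?thesis using fe by (intro exI[of _ False]) auto
  next
    assume "\<forall>x\<in>SO2. f x = transpose x" then show ?thesis using fe by (intro exI[of _ True]) auto
  qed
qed

definition trc :: "bool \<Rightarrow> m2 \<Rightarrow> m2" where "trc b A = (if b then transpose A else A)"

lemma trc_SO2: "A \<in> SO2 \<Longrightarrow> trc b A \<in> SO2" by (simp add: trc_def SO2_transpose)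
lemma trc_mult: "A \<in> SO2 \<Longrightarrow> B \<in> SO2 \<Longrightarrow> trc b (A ** B) = trc b A ** trc b B"
  by (simp add: trc_def SO2_transpose_mult)
lemma trc_trc[simp]: "trc b (trc b A) = A" by (simp add: trc_def)

definition alphaT :: "bool \<Rightarrow> bool \<Rightarrow> amg \<Rightarrow> amg" where
  "alphaT b1 b2 v = Inr (trc b1 (fst (projr v)), trc b2 (snd (projr v)))"

lemma alphaT_iso: "alphaT b1 b2 \<in> iso T2_grp T2_grp"
proof -
  have car: "alphaT b1 b2 v \<in> Inr ` (SO2 \<times> SO2)" if "v \<in> Inr ` (SO2 \<times> SO2)" for v
    using that by (auto simp: alphaT_def trc_SO2)
  have inv: "alphaT b1 b2 (alphaT b1 b2 v) = v" if "v \<in> Inr ` (SO2 \<times> SO2)" for v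
    using that by (auto simp: alphaT_def)
  have hom: "alphaT b1 b2 \<in> hom T2_grp T2_grp"
    unfolding hom_def using car by (auto simp: T2_grp_def alphaT_def trc_mult)
  have "bij_betw (alphaT b1 b2) (Inr ` (SO2 \<times> SO2)) (Inr ` (SO2 \<times> SO2))"
    by (rule bij_betwI[where g = "alphaT b1 b2"]) (use car inv in auto)
  then show ?thesis using hom by (simp add: iso_def T2_grp_def)
qed

definition sg :: "bool \<Rightarrow> bool \<Rightarrow> 3 \<Rightarrow> real" where
  "sg b1 b2 i = (if i = 1 then (if b1 then -1 else 1) else if i = 3 then (if b2 then -1 else 1) else 1)"

definition Dm :: "bool \<Rightarrow> bool \<Rightarrow> m3" where
  "Dm b1 b2 = (\<chi> i j. if i = j then sg b1 b2 i else 0)"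

definition cjm :: "bool \<Rightarrow> bool \<Rightarrow> m3 \<Rightarrow> m3" where
  "cjm b1 b2 M = Dm b1 b2 ** M ** Dm b1 b2"

lemma Dm_sq: "Dm b1 b2 ** Dm b1 b2 = mat 1"
  by (simp add: ME Dm_def sg_def)

lemma Dm_tr: "transpose (Dm b1 b2) = Dm b1 b2"
  by (simp add: ME Dm_def)

lemma cjm_mult: "cjm b1 b2 (M ** N) = cjm b1 b2 M ** cjm b1 b2 N"
proof -
  let ?D = "Dm b1 b2"
  have "?D ** (M ** N) ** ?D = ?D ** M ** (?D ** ?D) ** N ** ?D"
    by (simp add: Dm_sq matrix_mul_assoc)
  then show ?thesis by (simp add: cjm_def matrix_mul_assoc)
qed

lemma cjm_cjm[simp]: "cjm b1 b2 (cjm b1 b2 M) = M"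
  by (simp add: cjm_def matrix_mul_assoc Dm_sq) (simp add: matrix_mul_assoc[symmetric] Dm_sq)

lemma cjm_SO3: assumes "M \<in> SO3" shows "cjm b1 b2 M \<in> SO3"
proof -
  have oD: "orthogonal_matrix (Dm b1 b2)" by (simp add: orthogonal_matrix_def Dm_tr Dm_sq)
  have oM: "orthogonal_matrix M" and dM: "det M = 1" using assms by (auto simp: SO3_def)
  have "det (Dm b1 b2) * det (Dm b1 b2) = 1" by (metis Dm_sq det_I det_mul)
  then have "det (cjm b1 b2 M) = 1" by (simp add: cjm_def det_mul dM mult_ac)
  moreover have "orthogonal_matrix (cjm b1 b2 M)"
    unfolding cjm_def by (intro orthogonal_matrix_mul oD oM)
  ultimately show ?thesis by (simp add: SO3_def)
qed

lemma cjm_entry: "\<forall>i j. cjm b1 b2 M $ i $ j = sg b1 b2 i * sg b1 b2 j * M $ i $ j"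
  unfolding forall_3 by (simp add: cjm_def ME Dm_def sg_def)

lemma cjm_eps12: assumes "A \<in> SO2" shows "cjm b1 b2 (eps12_mat A) = eps12_mat (trc b1 A)"
proof -
  obtain z where A: "A = rotm z" using SO2_rotm(1)[OF assms] by blast
  show ?thesis unfolding A using cjm_entry[of b1 b2 "eps12_mat (rotm z)"]
    by (simp add: vec_eq_iff forall_3 eps12_mat_def sg_def trc_def transpose_rotm)
qed

lemma cjm_eps23: assumes "A \<in> SO2" shows "cjm b1 b2 (eps23_mat A) = eps23_mat (trc b2 A)"
proof -
  obtain z where A: "A = rotm z" using SO2_rotm(1)[OF assms] by blast
  show ?thesis unfolding A using cjm_entry[of b1 b2 "eps23_mat (rotm z)"]
    by (simp add: vec_eq_iff forall_3 eps23_mat_def sg_def trc_def transpose_rotm)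
qed

definition alphaE :: "bool \<Rightarrow> bool \<Rightarrow> amg \<Rightarrow> amg" where
  "alphaE b1 b2 v = Inl (cjm b1 b2 (projl v))"

lemma alphaE_iso: "alphaE b1 b2 \<in> iso SO3_grp SO3_grp"
proof -
  have car: "alphaE b1 b2 v \<in> Inl ` SO3" if "v \<in> Inl ` SO3" for v
    using that by (auto simp: alphaE_def cjm_SO3)
  have inv: "alphaE b1 b2 (alphaE b1 b2 v) = v" if "v \<in> Inl ` SO3" for v
    using that by (auto simp: alphaE_def)
  have hom: "alphaE b1 b2 \<in> hom SO3_grp SO3_grp"
    unfolding hom_def using car by (auto simp: SO3_grp_def alphaE_def cjm_mult)
  have "bij_betw (alphaE b1 b2) (Inl ` SO3) (Inl ` SO3)"
    by (rule bij_betwI[where g = "alphaE b1 b2"]) (use car inv in auto)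
  then show ?thesis using hom by (simp add: iso_def SO3_grp_def)
qed



lemma pair_edge:
  assumes h1: "phi1 \<in> hom SO2_grp SO3_grp" "inj_on phi1 SO2" "phi1 ` SO2 = eps12 ` SO2" "continuous_on SO2 (projl \<circ> phi1)"
    and h2: "phi2 \<in> hom SO2_grp SO3_grp" "inj_on phi2 SO2" "phi2 ` SO2 = eps23 ` SO2" "continuous_on SO2 (projl \<circ> phi2)"
  shows "\<exists>A. A \<in> iso SO3_grp SO3_grp \<and> (\<forall>x\<in>SO2. A (phi1 x) = eps12 x) \<and> (\<forall>x\<in>SO2. A (phi2 x) = eps23 x)"
proof -
  obtain b1 where b1: "\<forall>x\<in>SO2. phi1 x = eps12 (if b1 then transpose x else x)"
    using extract_sgn[OF h1 cont_blk12] by (auto simp: eps12_def blk12_eps SO3_grp_def eps12_mult)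
  obtain b2 where b2: "\<forall>x\<in>SO2. phi2 x = eps23 (if b2 then transpose x else x)"
    using extract_sgn[OF h2 cont_blk23] by (auto simp: eps23_def blk23_eps SO3_grp_def eps23_mult)
  have "\<forall>x\<in>SO2. alphaE b1 b2 (phi1 x) = eps12 x"
  proof
    fix x assume x: "x \<in> SO2"
    have "phi1 x = eps12 (trc b1 x)" using b1 x by (simp add: trc_def)
    then show "alphaE b1 b2 (phi1 x) = eps12 x"
      using cjm_eps12[OF trc_SO2[OF x, of b1], of b1 b2] by (simp add: alphaE_def eps12_def)
  qed
  moreover have "\<forall>x\<in>SO2. alphaE b1 b2 (phi2 x) = eps23 x"
  proof
    fix x assume x: "x \<in> SO2"
    have "phi2 x = eps23 (trc b2 x)" using b2 x by (simp add: trc_def)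
    then show "alphaE b1 b2 (phi2 x) = eps23 x"
      using cjm_eps23[OF trc_SO2[OF x, of b2], of b1 b2] by (simp add: alphaE_def eps23_def)
  qed
  ultimately show ?thesis using alphaE_iso by blast
qed

lemma pair_nonedge:
  assumes h1: "phi1 \<in> hom SO2_grp T2_grp" "inj_on phi1 SO2" "phi1 ` SO2 = iota1 ` SO2" "continuous_on SO2 (projr \<circ> phi1)"
    and h2: "phi2 \<in> hom SO2_grp T2_grp" "inj_on phi2 SO2" "phi2 ` SO2 = iota2 ` SO2" "continuous_on SO2 (projr \<circ> phi2)"
  shows "\<exists>A. A \<in> iso T2_grp T2_grp \<and> (\<forall>x\<in>SO2. A (phi1 x) = iota1 x) \<and> (\<forall>x\<in>SO2. A (phi2 x) = iota2 x)"
proof -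
  obtain b1 where b1: "\<forall>x\<in>SO2. phi1 x = iota1 (if b1 then transpose x else x)"
    using extract_sgn[OF h1 continuous_on_fst[OF continuous_on_id]]
    by (auto simp: iota1_def T2_grp_def)
  obtain b2 where b2: "\<forall>x\<in>SO2. phi2 x = iota2 (if b2 then transpose x else x)"
    using extract_sgn[OF h2 continuous_on_snd[OF continuous_on_id]]
    by (auto simp: iota2_def T2_grp_def)
  have "\<forall>x\<in>SO2. alphaT b1 b2 (phi1 x) = iota1 x"
    using b1 by (auto simp: alphaT_def iota1_def trc_def)
  moreover have "\<forall>x\<in>SO2. alphaT b1 b2 (phi2 x) = iota2 x"
    using b2 by (auto simp: alphaT_def iota2_def trc_def)
  ultimately show ?thesis using alphaT_iso by blast
qed

theorem mainTheorem4:
  fixes V :: "'v set" and E :: "'v \<Rightarrow> 'v \<Rightarrow> bool" and \<sigma> :: "nat \<Rightarrow> 'v"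
    and phi :: "nat \<Rightarrow> nat \<Rightarrow> m2 \<Rightarrow> amg"
  assumes "simple_diagram V E"
    and "bij_betw \<sigma> (index_set V) V"
    and "SO2_amalgam V E \<sigma> phi"
    and "continuous_amalgam V E \<sigma> phi"
  shows "amalgam_isomorphic V E \<sigma> phi (standard_amalgam E \<sigma>)"
proof -
  let ?I = "index_set V"
  let ?std = "standard_amalgam E \<sigma>"
  let ?G = "amal_grp E \<sigma>"
  have Esym: "E x y \<longleftrightarrow> E y x" for x y using assms(1) by (auto simp: simple_diagram_def)
  have Gsym: "?G i j = ?G j i" for i j by (simp add: amal_grp_def Esym)
  have am1: "\<And>i j. i \<in> ?I \<Longrightarrow> j \<in> ?I \<Longrightarrow> i \<noteq> j \<Longrightarrow> phi i j \<in> hom SO2_grp (?G i j) \<and> inj_on (phi i j) SO2"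
    and am2: "\<And>i j. i \<in> ?I \<Longrightarrow> j \<in> ?I \<Longrightarrow> i < j \<Longrightarrow>
        (if E (\<sigma> i) (\<sigma> j)
         then phi i j ` SO2 = eps12 ` SO2 \<and> phi j i ` SO2 = eps23 ` SO2
         else phi i j ` SO2 = iota1 ` SO2 \<and> phi j i ` SO2 = iota2 ` SO2)"
    using assms(3) unfolding SO2_amalgam_def by blast+
  have ca: "\<And>i j. i \<in> ?I \<Longrightarrow> j \<in> ?I \<Longrightarrow> i \<noteq> j \<Longrightarrow>
        (if E (\<sigma> i) (\<sigma> j) then continuous_on SO2 (projl \<circ> phi i j)
         else continuous_on SO2 (projr \<circ> phi i j))"
    using assms(4) unfolding continuous_amalgam_def by blast
  have pairs: "\<exists>A. A \<in> iso (?G p q) (?G p q) \<and> (\<forall>x\<in>SO2. A (phi p q x) = ?std p q x)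
                  \<and> (\<forall>x\<in>SO2. A (phi q p x) = ?std q p x)"
    if p: "p \<in> ?I" and q: "q \<in> ?I" and pq: "p < q" for p q
  proof (cases "E (\<sigma> p) (\<sigma> q)")
    case True
    then have Eqp: "E (\<sigma> q) (\<sigma> p)" using Esym by blast
    have "\<exists>A. A \<in> iso SO3_grp SO3_grp \<and> (\<forall>x\<in>SO2. A (phi p q x) = eps12 x) \<and> (\<forall>x\<in>SO2. A (phi q p x) = eps23 x)"
    proof (rule pair_edge)
      show "phi p q \<in> hom SO2_grp SO3_grp" "inj_on (phi p q) SO2"
        using am1[OF p q] pq True by (auto simp: amal_grp_def)
      show "phi q p \<in> hom SO2_grp SO3_grp" "inj_on (phi q p) SO2"
        using am1[OF q p] pq Eqp by (auto simp: amal_grp_def)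
      show "phi p q ` SO2 = eps12 ` SO2" "phi q p ` SO2 = eps23 ` SO2"
        using am2[OF p q pq] True by auto
      show "continuous_on SO2 (projl \<circ> phi p q)" using ca[OF p q] pq True by auto
      show "continuous_on SO2 (projl \<circ> phi q p)" using ca[OF q p] pq Eqp by auto
    qed
    then show ?thesis using True Eqp pq by (simp add: amal_grp_def standard_amalgam_def)
  next
    case False
    then have Eqp: "\<not> E (\<sigma> q) (\<sigma> p)" using Esym by blast
    have "\<exists>A. A \<in> iso T2_grp T2_grp \<and> (\<forall>x\<in>SO2. A (phi p q x) = iota1 x) \<and> (\<forall>x\<in>SO2. A (phi q p x) = iota2 x)"
    proof (rule pair_nonedge)
      show "phi p q \<in> hom SO2_grp T2_grp" "inj_on (phi p q) SO2"
        using am1[OF p q] pq False by (auto simp: amal_grp_def)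
      show "phi q p \<in> hom SO2_grp T2_grp" "inj_on (phi q p) SO2"
        using am1[OF q p] pq Eqp by (auto simp: amal_grp_def)
      show "phi p q ` SO2 = iota1 ` SO2" "phi q p ` SO2 = iota2 ` SO2"
        using am2[OF p q pq] False by auto
      show "continuous_on SO2 (projr \<circ> phi p q)" using ca[OF p q] pq False by auto
      show "continuous_on SO2 (projr \<circ> phi q p)" using ca[OF q p] pq Eqp by auto
    qed
    then show ?thesis using False Eqp pq by (simp add: amal_grp_def standard_amalgam_def)
  qed
  define Ach where "Ach p q = (SOME A. A \<in> iso (?G p q) (?G p q) \<and> (\<forall>x\<in>SO2. A (phi p q x) = ?std p q x)
                  \<and> (\<forall>x\<in>SO2. A (phi q p x) = ?std q p x))" for p q
  have Ach: "Ach p q \<in> iso (?G p q) (?G p q) \<and> (\<forall>x\<in>SO2. Ach p q (phi p q x) = ?std p q x)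
                  \<and> (\<forall>x\<in>SO2. Ach p q (phi q p x) = ?std q p x)"
    if "p \<in> ?I" "q \<in> ?I" "p < q" for p q
    unfolding Ach_def by (rule someI_ex[OF pairs[OF that]])
  define \<alpha> where "\<alpha> i j = (if i < j then Ach i j else Ach j i)" for i j
  have main: "\<alpha> i j \<in> iso (?G i j) (?G i j) \<and> (\<forall>x\<in>carrier (?G i j). \<alpha> i j x = \<alpha> j i x)
      \<and> (\<forall>x\<in>SO2. \<alpha> i j (phi i j x) = ?std i j x)"
    if i: "i \<in> ?I" and j: "j \<in> ?I" and ij: "i \<noteq> j" for i j
  proof (cases "i < j")
    case True then show ?thesis using Ach[OF i j True] by (simp add: \<alpha>_def)
  next
    case False then have ji: "j < i" using ij by simp
    then show ?thesis using Ach[OF j i ji] False Gsym[of i j] by (simp add: \<alpha>_def)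
  qed
  show ?thesis unfolding amalgam_isomorphic_def
    apply (rule exI[of _ "\<lambda>i. i"], rule exI[of _ \<alpha>], rule conjI)
     apply (simp add: bij_betw_def)
    using main by blast
qed


end
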